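(* Let $\chi$ and $\eta$ be Dirichlet characters mod $N$ with $\chi$ primitive. Then $J_{\mathfrak J_2}(\chi,\eta)=N^4J(\chi,\chi,\eta)$.
   Context: $\mathfrak C_\mathbb Q$ is the (positive definite) Cayley octonion algebra with involution $x\mapsto\bar x$ and norm $N(x)=x\bar x$, and $\mathfrak o$ the order of integral Cayley numbers ($N|_\mathfrak o$ is a positive definite integral quadratic form of rank $8$ whose Gram matrix lies in $\frac12GL_8(\mathbb Z)$). $\mathfrak J_2(\mathbb Z)$ is the set of matrices $B=\begin{pmatrix}a&x\\ \bar x&b\end{pmatrix}$, $a,b\in\mathbb Z$, $x\in\mathfrak o$, with $\det B=ab-N(x)$, $\mathrm{Tr}(B)=a+b$, and $\mathfrak J_2(\mathbb Z/N\mathbb Z)=\mathfrak J_2(\mathbb Z)\otimes\mathbb Z/N\mathbb Z$. Dirichlet characters vanish on non-units mod $N$. $J_{\mathfrak J_2}(\chi_1,\chi_2)=\sum_{B\in\mathfrak J_2(\mathbb Z/N\mathbb Z)}\chi_1(\det B)\chi_2(1-\mathrm{Tr}(B))$ and $J(\chi_1,\chi_2,\chi_3)=\sum_{a_1+a_2+a_3=1,\ a_i\in\mathbb Z/N\mathbb Z}\chi_1(a_1)\chi_2(a_2)\chi_3(a_3)$. *)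

theory Defs
  imports "HOL-Number_Theory.Number_Theory" Complex_Main
begin

definition dirichlet_char :: "nat \<Rightarrow> (int \<Rightarrow> complex) \<Rightarrow> bool" where
  "dirichlet_char N \<chi> \<longleftrightarrow>
     (\<forall>a. \<chi> (a + int N) = \<chi> a) \<and>
     (\<forall>a b. \<chi> (a * b) = \<chi> a * \<chi> b) \<and>
     \<chi> 1 = 1 \<and>
     (\<forall>a. \<not> coprime a (int N) \<longrightarrow> \<chi> a = 0)"

text \<open>Primitive: not induced from any character of a modulus d properly dividing N,
  i.e. for every proper divisor d of N, chi is nontrivial on the units congruent to 1 mod d.\<close>
definition primitive_dirichlet_char :: "nat \<Rightarrow> (int \<Rightarrow> complex) \<Rightarrow> bool" where
  "primitive_dirichlet_char N \<chi> \<longleftrightarrow>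
     dirichlet_char N \<chi> \<and>
     (\<forall>d::nat. d dvd N \<and> d < N \<longrightarrow>
        (\<exists>a. coprime a (int N) \<and> [a = 1] (mod int d) \<and> \<chi> a \<noteq> 1))"

text \<open>The order o of integral Cayley numbers, with its norm form, is (up to isometry)
  the E8 lattice: o = Z^8 with N(x) = x^T C x / 2, C the E8 Cartan matrix
  (Gram matrix of N in (1/2) GL_8(Z), positive definite, integral).
  Dynkin edges (0-based): 0-2, 2-3, 3-4, 4-5, 5-6, 6-7, 1-3.\<close>
definition octo_norm :: "int list \<Rightarrow> int" where
  "octo_norm x = (\<Sum>i<8. (x ! i)^2)
     - (x!0 * x!2 + x!2 * x!3 + x!3 * x!4 + x!4 * x!5 + x!5 * x!6 + x!6 * x!7 + x!1 * x!3)"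

text \<open>Representatives of o/No (coordinates w.r.t. a Z-basis of o).\<close>
definition octo_mod :: "nat \<Rightarrow> int list set" where
  "octo_mod N = {x. length x = 8 \<and> set x \<subseteq> {0..<int N}}"

text \<open>J_J2(chi1,chi2): sum over B = (a, x; x-bar, b) in J_2(Z/NZ) of
  chi1(det B) chi2(1 - Tr B), det B = ab - N(x), Tr B = a + b.\<close>
definition jacobi_J2 :: "nat \<Rightarrow> (int \<Rightarrow> complex) \<Rightarrow> (int \<Rightarrow> complex) \<Rightarrow> complex" where
  "jacobi_J2 N \<chi>1 \<chi>2 =
     (\<Sum>a\<in>{0..<int N}. \<Sum>b\<in>{0..<int N}. \<Sum>x\<in>octo_mod N.
        \<chi>1 (a * b - octo_norm x) * \<chi>2 (1 - (a + b)))"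

definition jacobi3 :: "nat \<Rightarrow> (int \<Rightarrow> complex) \<Rightarrow> (int \<Rightarrow> complex) \<Rightarrow> (int \<Rightarrow> complex) \<Rightarrow> complex" where
  "jacobi3 N \<chi>1 \<chi>2 \<chi>3 =
     (\<Sum>a1\<in>{0..<int N}. \<Sum>a2\<in>{0..<int N}. \<chi>1 a1 * \<chi>2 a2 * \<chi>3 (1 - a1 - a2))"

end

theory Submission
  imports Defs
begin

lemma periodic_int:
  fixes f :: "int \<Rightarrow> 'b"
  assumes per: "\<And>a. f (a + m) = f a"
  shows "f (a + k * m) = f a"
proof -
  have A: "f (b + int j * m) = f b" for b j
  proof (induction j)
    case 0 then show ?case by simp
  next
    case (Suc j)
    have e: "b + int (Suc j) * m = (b + int j * m) + m" by (simp add: algebra_simps)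
    show ?case unfolding e per by (rule Suc)
  qed
  have B: "f (b - int j * m) = f b" for b j
    using A[of "b - int j * m" j] by simp
  show ?thesis
  proof (cases "0 \<le> k")
    case True
    then obtain j where "k = int j" by (metis nonneg_eq_int)
    then show ?thesis using A by simp
  next
    case False
    then obtain j where "k = - int j" by (metis nonneg_eq_int neg_0_le_iff_le le_cases minus_minus)
    then show ?thesis using B[of a j] by simp
  qed
qed

lemma periodic_cong:
  fixes f :: "int \<Rightarrow> 'b"
  assumes per: "\<And>a. f (a + m) = f a" and c: "[a = b] (mod m)"
  shows "f a = f b"
proof -
  from c have "m dvd (b - a)" by (simp add: cong_iff_dvd_diff dvd_diff_commute)
  then obtain k where "b - a = m * k" by (auto elim: dvdE)
  hence "b = a + k * m" by (simp add: algebra_simps)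
  thus ?thesis using periodic_int[of f m, OF per] by simp
qed

lemma sum_affine_perm:
  fixes m a j :: int
  assumes m: "0 < m" and cop: "coprime a m"
  shows "(\<Sum>k\<in>{0..<m}. g ((j + a*k) mod m)) = (\<Sum>k\<in>{0..<m}. g k)"
proof -
  let ?h = "\<lambda>k. (j + a*k) mod m"
  have inj: "inj_on ?h {0..<m}"
  proof
    fix x y assume x: "x \<in> {0..<m}" and y: "y \<in> {0..<m}" and e: "?h x = ?h y"
    have "[j + a*x = j + a*y] (mod m)" using e by (simp add: cong_def)
    hence "[a*x = a*y] (mod m)" by (simp add: cong_add_lcancel)
    hence "[x = y] (mod m)" using cong_mult_lcancel[OF cop] by simp
    thus "x = y" using x y cong_less_imp_eq_int by auto
  qed
  have sub: "?h ` {0..<m} \<subseteq> {0..<m}" using m by auto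
  have im: "?h ` {0..<m} = {0..<m}"
    by (rule endo_inj_surj[OF _ sub inj]) simp
  show ?thesis using sum.reindex[OF inj, of g] im by simp
qed

lemma sum_blocks:
  fixes g :: "int \<Rightarrow> 'b::comm_monoid_add" and m :: int
  assumes m: "0 < m" and per: "\<And>y. g (y + m) = g y"
  shows "(\<Sum>y\<in>{0..<int q * m}. g y) = (\<Sum>i<q. (\<Sum>y\<in>{0..<m}. g y))"
proof (induction q)
  case 0 then show ?case by simp
next
  case (Suc q)
  have nn: "0 \<le> int q * m" "0 \<le> m * int q" using m by simp_all
  have split: "{0..<int (Suc q) * m} = {0..<int q * m} \<union> {int q * m..<m + int q * m}"
  proof -
    have "int (Suc q) * m = m + int q * m" by (simp add: algebra_simps)
    thus ?thesis using ivl_disj_un_two(3)[of 0 "int q * m" "m + int q*m"] nn m by simp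
  qed
  have disj: "{0..<int q * m} \<inter> {int q * m..<m + int q * m} = {}" by auto
  have inj: "inj_on (\<lambda>y. y + int q * m) {0..<m}" by (simp add: inj_on_def)
  have "(\<Sum>y\<in>{int q * m..<m + int q * m}. g y) = (\<Sum>y\<in>{0..<m}. g (y + int q * m))"
    using sum.reindex[OF inj, of g] by simp
  also have "\<dots> = (\<Sum>y\<in>{0..<m}. g y)" using periodic_int[of g m, OF per] by simp
  finally show ?case using split disj Suc by (simp add: sum.union_disjoint)
qed

definition primf :: "int \<Rightarrow> (int \<Rightarrow> complex) \<Rightarrow> bool" where
  "primf n f \<longleftrightarrow> (\<forall>a. f (a + n) = f a) \<and>
     (\<forall>d c. d dvd n \<and> 0 < d \<and> d < n \<longrightarrow> (\<Sum>k\<in>{0..<n div d}. f (c + d*k)) = 0)"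

lemma lemmaL:
  assumes pf: "primf n f" and n: "0 < n"
  shows "(\<Sum>y\<in>{0..<n}. f (c + a*y)) = (if n dvd a then of_int n * f c else 0)"
proof -
  have per: "\<And>z. f (z + n) = f z" using pf by (simp add: primf_def)
  show ?thesis
  proof (cases "n dvd a")
    case True
    have "f (c + a*y) = f c" for y
    proof (rule periodic_cong[of f n, OF per])
      show "[c + a*y = c] (mod n)" using True by (simp add: cong_add_lcancel_0 cong_0_iff)
    qed
    hence "(\<Sum>y\<in>{0..<n}. f (c + a*y)) = (\<Sum>y\<in>{0..<n}. f c)" by simp
    also have "\<dots> = of_int n * f c" using n by simp
    finally show ?thesis using True by simp
  next
    case False
    define d where "d = gcd a n"
    have d0: "0 < d" using n by (simp add: d_def)
    have ddn: "d dvd n" and dda: "d dvd a" by (simp_all add: d_def)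
    have dne: "d \<noteq> n" using False dda by auto
    have dle: "d \<le> n" using ddn n by (simp add: zdvd_imp_le)
    define m where "m = n div d"
    define a' where "a' = a div d"
    have nm: "n = d * m" using ddn by (simp add: m_def)
    have aa: "a = d * a'" using dda by (simp add: a'_def)
    have m0: "0 < m" using nm n d0 by (simp add: zero_less_mult_iff)
    have cop: "coprime a' m" unfolding a'_def m_def d_def
      using div_gcd_coprime[of a n] n by simp
    have gper: "f (c + a*(y + m)) = f (c + a*y)" for y
    proof -
      have e: "c + a*(y + m) = (c + a*y) + a' * n" using nm aa by (simp add: algebra_simps)
      show ?thesis unfolding e by (rule periodic_int[of f n, OF per])
    qed
    have "(\<Sum>y\<in>{0..<n}. f (c + a*y)) = (\<Sum>i<nat d. (\<Sum>y\<in>{0..<m}. f (c + a*y)))"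
      using sum_blocks[of m "\<lambda>y. f (c + a*y)" "nat d", OF m0 gper] d0 nm by simp
    also have "(\<Sum>y\<in>{0..<m}. f (c + a*y)) = (\<Sum>y\<in>{0..<m}. f (c + d*((0 + a'*y) mod m)))"
    proof (rule sum.cong[OF refl])
      fix y
      have hm: "(d*(a'*y)) mod n = d*((a'*y) mod m)" using nm by (simp add: mod_mult_mult1)
      have h1: "a*y = d*(a'*y)" using aa by simp
      have "[d*(a'*y) = (d*(a'*y)) mod n] (mod n)" by (simp add: cong_def)
      hence "[a*y = d*((0 + a'*y) mod m)] (mod n)" unfolding h1 hm by simp
      hence "[c + a*y = c + d*((0 + a'*y) mod m)] (mod n)" by (simp add: cong_add_lcancel)
      thus "f (c + a*y) = f (c + d*((0 + a'*y) mod m))" by (rule periodic_cong[of f n, OF per])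
    qed
    also have "\<dots> = (\<Sum>k\<in>{0..<m}. f (c + d*k))"
      using sum_affine_perm[OF m0 cop, of "\<lambda>k. f (c + d*k)" 0] by simp
    also have "\<dots> = 0" using pf ddn d0 dne dle unfolding primf_def m_def by auto
    finally show ?thesis using False by simp
  qed
qed


definition Xn :: "int \<Rightarrow> nat \<Rightarrow> int list set" where
  "Xn n k = {xs. set xs \<subseteq> {0..<n} \<and> length xs = k}"

lemma finite_Xn: "finite (Xn n k)"
  unfolding Xn_def by (rule finite_lists_length_eq) simp

lemma card_Xn: "0 \<le> n \<Longrightarrow> card (Xn n k) = nat n ^ k"
  unfolding Xn_def by (subst card_lists_length_eq) simp_all

lemma sum_Xn_Suc:
  "(\<Sum>y\<in>Xn n (Suc k). F y) = (\<Sum>a\<in>{0..<n}. \<Sum>xs\<in>Xn n k. F (a # xs))"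
proof -
  have eq: "Xn n (Suc k) = (\<lambda>(xs, a). a # xs) ` (Xn n k \<times> {0..<n})"
    unfolding Xn_def by (rule lists_length_Suc_eq)
  have inj: "inj_on (\<lambda>(xs, a). a # xs) (Xn n k \<times> {0..<n})" by (auto simp: inj_on_def)
  have "(\<Sum>y\<in>Xn n (Suc k). F y) = (\<Sum>p\<in>Xn n k \<times> {0..<n}. F (case p of (xs, a) \<Rightarrow> a # xs))"
    unfolding eq by (simp add: sum.reindex[OF inj] o_def)
  also have "\<dots> = (\<Sum>xs\<in>Xn n k. \<Sum>a\<in>{0..<n}. F (a # xs))"
    by (simp add: sum.cartesian_product case_prod_beta)
  also have "\<dots> = (\<Sum>a\<in>{0..<n}. \<Sum>xs\<in>Xn n k. F (a # xs))" by (rule sum.swap)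
  finally show ?thesis .
qed

lemma LV:
  assumes pf: "primf n f" and n: "0 < n"
  shows "(\<Sum>y\<in>Xn n k. f (c + (\<Sum>j<k. w j * y!j))) =
           (if \<forall>j<k. n dvd w j then of_int n ^ k * f c else 0)"
proof (induction k arbitrary: c w)
  case 0
  have "Xn n 0 = {[]}" by (auto simp: Xn_def)
  then show ?case by simp
next
  case (Suc k)
  have "(\<Sum>y\<in>Xn n (Suc k). f (c + (\<Sum>j<Suc k. w j * y!j)))
        = (\<Sum>a\<in>{0..<n}. \<Sum>xs\<in>Xn n k. f ((c + w 0 * a) + (\<Sum>j<k. w (Suc j) * xs!j)))"
    unfolding sum_Xn_Suc by (simp del: sum.lessThan_Suc add: sum.lessThan_Suc_shift add.assoc)
  also have "\<dots> = (\<Sum>a\<in>{0..<n}. (if \<forall>j<k. n dvd w (Suc j) then of_int n ^ k * f (c + w 0 * a) else 0))"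
    using Suc.IH[of _ "\<lambda>j. w (Suc j)"] by simp
  also have "\<dots> = (if \<forall>j<k. n dvd w (Suc j) then of_int n ^ k * (\<Sum>a\<in>{0..<n}. f (c + w 0 * a)) else 0)"
  proof (cases "\<forall>j<k. n dvd w (Suc j)")
    case True then show ?thesis by (simp add: sum_distrib_left)
  next
    case False then show ?thesis by (simp only: if_not_P[OF False] if_False sum.neutral_const)
  qed
  also have "\<dots> = (if \<forall>j<Suc k. n dvd w j then of_int n ^ Suc k * f c else 0)"
  proof -
    have ex: "(\<forall>j<Suc k. n dvd w j) \<longleftrightarrow> n dvd w 0 \<and> (\<forall>j<k. n dvd w (Suc j))"
      by (auto simp: less_Suc_eq_0_disj)
    show ?thesis using lemmaL[OF pf n, of c "w 0"] unfolding ex by (auto simp: ac_simps)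
  qed
  finally show ?case .
qed

lemma prim_primf:
  assumes N: "0 < N" and pc: "primitive_dirichlet_char N \<chi>"
  shows "primf (int N) \<chi>"
proof -
  have dc: "dirichlet_char N \<chi>" using pc by (simp add: primitive_dirichlet_char_def)
  have per: "\<And>a. \<chi> (a + int N) = \<chi> a" and mult: "\<And>a b. \<chi> (a * b) = \<chi> a * \<chi> b"
    using dc by (simp_all add: dirichlet_char_def)
  have "(\<Sum>k\<in>{0..<int N div d}. \<chi> (c + d*k)) = 0"
    if dd: "d dvd int N" and d0: "0 < d" and dl: "d < int N" for d c
  proof -
    define dn where "dn = nat d"
    have dnd: "int dn = d" using d0 by (simp add: dn_def)
    have "dn dvd N" using dd dnd by (metis int_dvd_int_iff)
    moreover have "dn < N" using dl dnd by simp
    ultimately obtain a where cop: "coprime a (int N)" and a1: "[a = 1] (mod int dn)" and ca: "\<chi> a \<noteq> 1"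
      using pc unfolding primitive_dirichlet_char_def by blast
    define m where "m = int N div d"
    have nm: "int N = d * m" using dd by (simp add: m_def)
    have "0 < d * m" using nm N by simp
    hence m0: "0 < m" using d0 zero_less_mult_pos by blast
    from a1 have "d dvd a - 1" using dnd by (simp add: cong_iff_dvd_diff)
    then obtain e where e: "a - 1 = d * e" by (auto elim: dvdE)
    have copm: "coprime a m" using cop nm by simp
    define S where "S = (\<Sum>k\<in>{0..<m}. \<chi> (c + d*k))"
    have "\<chi> a * S = (\<Sum>k\<in>{0..<m}. \<chi> (a * (c + d*k)))"
      by (simp add: S_def sum_distrib_left mult)
    also have "\<dots> = (\<Sum>k\<in>{0..<m}. \<chi> (c + d*((e*c + a*k) mod m)))"
    proof (rule sum.cong[OF refl])
      fix k
      have h1: "a * (c + d*k) = c + d*(e*c + a*k)"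
      proof -
        have "a = 1 + d*e" using e by simp
        thus ?thesis by (simp add: algebra_simps)
      qed
      have hm: "(d*(e*c + a*k)) mod int N = d*((e*c + a*k) mod m)" using nm by (simp add: mod_mult_mult1)
      have "[d*(e*c + a*k) = (d*(e*c + a*k)) mod int N] (mod int N)" by (simp add: cong_def)
      hence "[d*(e*c + a*k) = d*((e*c + a*k) mod m)] (mod int N)" unfolding hm .
      hence "[a * (c + d*k) = c + d*((e*c + a*k) mod m)] (mod int N)" unfolding h1 by (simp add: cong_add_lcancel)
      thus "\<chi> (a * (c + d*k)) = \<chi> (c + d*((e*c + a*k) mod m))" by (rule periodic_cong[of \<chi>, OF per])
    qed
    also have "\<dots> = S" unfolding S_def
      using sum_affine_perm[OF m0 copm, of "\<lambda>k. \<chi> (c + d*k)" "e*c"] by simp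
    finally have "(\<chi> a - 1) * S = 0" by (simp add: algebra_simps)
    hence "S = 0" using ca by simp
    thus ?thesis by (simp add: S_def m_def)
  qed
  thus ?thesis using per by (auto simp: primf_def)
qed

lemma primf_neg:
  assumes pf: "primf n \<chi>" and mult: "\<And>a b. \<chi> (a * b) = \<chi> a * \<chi> b"
  shows "primf n (\<lambda>z. \<chi> (- z))"
proof -
  have per: "\<And>a. \<chi> (a + n) = \<chi> a" using pf by (simp add: primf_def)
  have "\<chi> (- (a + n)) = \<chi> (- a)" for a
    using per[of "- a - n"] by simp
  moreover have "(\<Sum>k\<in>{0..<n div d}. \<chi> (- (c + d*k))) = 0" if "d dvd n" "0 < d" "d < n" for d c
  proof -
    have "(\<Sum>k\<in>{0..<n div d}. \<chi> (- (c + d*k))) = \<chi> (-1) * (\<Sum>k\<in>{0..<n div d}. \<chi> (c + d*k))"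
      by (simp add: sum_distrib_left mult[symmetric])
    thus ?thesis using pf that by (simp add: primf_def)
  qed
  ultimately show ?thesis by (simp add: primf_def)
qed

definition octA :: "int list \<Rightarrow> int list" where
  "octA y = [(y!0 - 2 * y!1 + y!5), (y!0 - 3 * y!1 + y!2 + y!5), (2 * y!0 - 4 * y!1 + y!2 + y!5), (2 * y!0 - 6 * y!1 + 2 * y!2 + y!5 + y!6), (y!0 - 5 * y!1 + 2 * y!2 + y!5 + y!6 - y!7), (- 4 * y!1 + 2 * y!2 + y!5), (- 2 * y!1 + 2 * y!2 - y!3 + y!5), (- y!1 + y!2 - y!3 + y!4)]"

definition octB :: "int list \<Rightarrow> int list" where
  "octB y = [(y!3 - 2 * y!4 + y!6 + y!7), (y!3 - 2 * y!4 + 3 * y!7), (2 * y!3 - 4 * y!4 + y!5 + 3 * y!7), (3 * y!3 - 5 * y!4 + 5 * y!7), (- y!1 + 3 * y!3 - 4 * y!4 + 4 * y!7), (- y!1 - y!2 + 3 * y!3 - 3 * y!4 + 3 * y!7), (- y!0 - y!1 + 2 * y!3 - 2 * y!4 + 2 * y!7), (- y!1 + y!3 - y!4 + y!7)]"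

definition gram :: "int list \<Rightarrow> int list" where
  "gram y = [(2 * y!0 - y!2), (2 * y!1 - y!3), (- y!0 + 2 * y!2 - y!3), (- y!1 - y!2 + 2 * y!3 - y!4), (- y!3 + 2 * y!4 - y!5), (- y!4 + 2 * y!5 - y!6), (- y!5 + 2 * y!6 - y!7), (- y!6 + 2 * y!7)]"

definition ginv :: "int list \<Rightarrow> int list" where
  "ginv y = [(4 * y!0 + 5 * y!1 + 7 * y!2 + 10 * y!3 + 8 * y!4 + 6 * y!5 + 4 * y!6 + 2 * y!7), (5 * y!0 + 8 * y!1 + 10 * y!2 + 15 * y!3 + 12 * y!4 + 9 * y!5 + 6 * y!6 + 3 * y!7), (7 * y!0 + 10 * y!1 + 14 * y!2 + 20 * y!3 + 16 * y!4 + 12 * y!5 + 8 * y!6 + 4 * y!7), (10 * y!0 + 15 * y!1 + 20 * y!2 + 30 * y!3 + 24 * y!4 + 18 * y!5 + 12 * y!6 + 6 * y!7), (8 * y!0 + 12 * y!1 + 16 * y!2 + 24 * y!3 + 20 * y!4 + 15 * y!5 + 10 * y!6 + 5 * y!7), (6 * y!0 + 9 * y!1 + 12 * y!2 + 18 * y!3 + 15 * y!4 + 12 * y!5 + 8 * y!6 + 4 * y!7), (4 * y!0 + 6 * y!1 + 8 * y!2 + 12 * y!3 + 10 * y!4 + 8 * y!5 + 6 * y!6 + 3 * y!7), (2 * y!0 + 3 * y!1 + 4 * y!2 + 6 * y!3 + 5 * y!4 + 4 * y!5 + 3 * y!6 + 2 * y!7)]"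

definition vec8 :: "(nat \<Rightarrow> int) \<Rightarrow> int list" where
  "vec8 f = [f 0, f 1, f 2, f 3, f 4, f 5, f 6, f 7]"

lemma less8: "(i::nat) < 8 \<longleftrightarrow> i = 0 \<or> i = 1 \<or> i = 2 \<or> i = 3 \<or> i = 4 \<or> i = 5 \<or> i = 6 \<or> i = 7"
  by auto

lemma vec8_nth [simp]: "i < 8 \<Longrightarrow> vec8 f ! i = f i"
  unfolding less8 by (auto simp: vec8_def)

lemma length_vec8 [simp]: "length (vec8 f) = 8" by (simp add: vec8_def)

lemma set_vec8: "set (vec8 f) = {f 0, f 1, f 2, f 3, f 4, f 5, f 6, f 7}"
  by (simp add: vec8_def)

definition octL :: "int \<Rightarrow> int \<Rightarrow> int list \<Rightarrow> int list" where
  "octL s t y = vec8 (\<lambda>i. y!i + s * octA y ! i + t * octB y ! i)"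

definition addv :: "int list \<Rightarrow> int list \<Rightarrow> int list" where
  "addv x y = vec8 (\<lambda>i. x!i + y!i)"

definition dot :: "int list \<Rightarrow> int list \<Rightarrow> int" where
  "dot w y = (\<Sum>j<8. w!j * y!j)"

lemma sum8: "(\<Sum>j<(8::nat). f j) = f 0 + f 1 + f 2 + f 3 + f 4 + f 5 + f 6 + (f 7 :: int)"
  by (simp add: eval_nat_numeral)

lemma octo_norm_exp: "octo_norm x = (x!0)^2 + (x!1)^2 + (x!2)^2 + (x!3)^2 + (x!4)^2 + (x!5)^2 + (x!6)^2 + (x!7)^2
     - (x!0 * x!2 + x!2 * x!3 + x!3 * x!4 + x!4 * x!5 + x!5 * x!6 + x!6 * x!7 + x!1 * x!3)"
  unfolding octo_norm_def sum8 by simp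

lemma I0: "octo_norm (addv x y) = octo_norm x + octo_norm y + dot (gram x) y"
  unfolding octo_norm_exp addv_def vec8_def dot_def sum8 gram_def
  by (simp add: algebra_simps power2_eq_square)

lemma I1: "octo_norm (octL s t y) = (s^2+t^2+1) * octo_norm y"
  unfolding octo_norm_exp octL_def vec8_def octA_def octB_def
  by (simp add: algebra_simps power2_eq_square)

lemma I2: "dot (gram x) (octL s t y) = dot (gram (octL (-s) (-t) x)) y"
  unfolding octL_def vec8_def octA_def octB_def dot_def sum8 gram_def
  by (simp add: algebra_simps)

lemma I3: "ginv (gram x) = vec8 (\<lambda>i. x!i)"
  unfolding ginv_def gram_def vec8_def
  by (simp add: algebra_simps)

lemma dot_gram_sym: "dot (gram x) y = dot (gram y) x"
  unfolding dot_def sum8 gram_def by (simp add: algebra_simps)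

lemma Q_homog: "octo_norm (vec8 (\<lambda>i. c * u!i)) = c^2 * octo_norm u"
  unfolding octo_norm_exp vec8_def by (simp add: algebra_simps power2_eq_square)

lemma Q_zero: "octo_norm (replicate 8 0) = 0"
  unfolding octo_norm_exp by simp

lemma octo_norm_eqI:
  assumes "\<forall>i<8. x!i = y!i" shows "octo_norm x = octo_norm y"
  using assms unfolding octo_norm_exp less8 by simp

lemma Q_cong:
  assumes "\<forall>i<8. [x!i = y!i] (mod n)" shows "[octo_norm x = octo_norm y] (mod n)"
proof -
  have h: "[x!i = y!i] (mod n)" if "i<8" for i using assms that by simp
  show ?thesis unfolding octo_norm_exp
    by (intro cong_diff cong_add cong_mult cong_pow h) simp_all
qed

lemma dot_cong:
  assumes "\<forall>i<8. [w!i = w'!i] (mod n)" shows "[dot w y = dot w' y] (mod n)"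
  unfolding dot_def using assms by (intro cong_sum cong_mult) auto

lemma ginv_dvd:
  assumes h: "\<forall>j<8. d dvd w!j" and i: "i < 8"
  shows "d dvd ginv w ! i"
proof -
  have h0: "d dvd w!0" and h1: "d dvd w!1" and h2: "d dvd w!2" and h3: "d dvd w!3"
   and h4: "d dvd w!4" and h5: "d dvd w!5" and h6: "d dvd w!6" and h7: "d dvd w!7"
    using h by simp_all
  have h1': "d dvd w ! Suc 0" using h by simp
  show ?thesis using i unfolding less8
    by (elim disjE; simp add: ginv_def; intro dvd_add dvd_mult; simp add: h0 h1' h2 h3 h4 h5 h6 h7)
qed

lemma gram_dvd:
  assumes h: "\<forall>j<8. d dvd gram z ! j" and i: "i < 8"
  shows "d dvd z ! i"
  using ginv_dvd[OF h i] I3[of z] i by simp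

definition trv :: "int \<Rightarrow> int list \<Rightarrow> int list \<Rightarrow> int list" where
  "trv n v x = vec8 (\<lambda>i. (x!i + v!i) mod n)"

definition negv :: "int list \<Rightarrow> int list" where
  "negv v = vec8 (\<lambda>i. - v!i)"

lemma trv_mem: "0 < n \<Longrightarrow> trv n v x \<in> Xn n 8"
  by (simp add: Xn_def trv_def set_vec8)

lemma trv_inv:
  assumes n: "0 < n" and x: "x \<in> Xn n 8"
  shows "trv n (negv v) (trv n v x) = x" "trv n v (trv n (negv v) x) = x"
proof -
  have lx: "length x = 8" and sx: "set x \<subseteq> {0..<n}" using x by (auto simp: Xn_def)
  have r: "x!i mod n = x!i" if "i < 8" for i
  proof -
    have "x!i \<in> set x" using lx that by simp
    hence "x!i \<in> {0..<n}" using sx by blast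
    thus ?thesis by simp
  qed
  show "trv n (negv v) (trv n v x) = x"
    by (rule nth_equalityI) (simp_all add: lx trv_def negv_def mod_add_left_eq mod_diff_left_eq r)
  show "trv n v (trv n (negv v) x) = x"
    by (rule nth_equalityI) (simp_all add: lx trv_def negv_def mod_add_left_eq mod_diff_left_eq r)
qed

lemma trv_bij: "0 < n \<Longrightarrow> bij_betw (trv n v) (Xn n 8) (Xn n 8)"
  by (rule bij_betw_byWitness[where f'="trv n (negv v)"]) (auto simp: trv_inv trv_mem)

lemma sum_trv: "0 < n \<Longrightarrow> (\<Sum>x\<in>Xn n 8. g (trv n v x)) = (\<Sum>x\<in>Xn n 8. g x)"
  using sum.reindex_bij_betw[OF trv_bij] by blast

lemma Q_trv: "[octo_norm (trv n v x) = octo_norm (addv x v)] (mod n)"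
  by (rule Q_cong) (simp add: trv_def addv_def cong_def)


definition goodpair :: "int \<Rightarrow> (int list \<Rightarrow> int list) \<Rightarrow> (int list \<Rightarrow> int list) \<Rightarrow> bool" where
  "goodpair m \<phi> \<psi> \<longleftrightarrow> (\<forall>x y. [octo_norm (addv x (\<phi> y)) = octo_norm x + dot (\<psi> x) y] (mod m)) \<and>
     (\<forall>x. (\<forall>j<8. m dvd \<psi> x ! j) \<longrightarrow> m dvd octo_norm x)"

lemma main_sum:
  assumes pf: "primf n f" and n: "0 < n" and gp: "goodpair n \<phi> \<psi>"
  shows "(\<Sum>x\<in>Xn n 8. f (c - octo_norm x)) = of_nat (card {x\<in>Xn n 8. \<forall>j<8. n dvd \<psi> x ! j}) * f c"
proof -
  let ?X = "Xn n 8"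
  let ?K = "{x\<in>Xn n 8. \<forall>j<8. n dvd \<psi> x ! j}"
  have per: "\<And>a. f (a + n) = f a" using pf by (simp add: primf_def)
  have cardX: "card ?X = nat n ^ 8" using n by (simp add: card_Xn)
  define S where "S = (\<Sum>x\<in>?X. f (c - octo_norm x))"
  have "of_int n ^ 8 * S = (\<Sum>y\<in>?X. S)" using cardX n by simp
  also have "\<dots> = (\<Sum>y\<in>?X. \<Sum>x\<in>?X. f (c - octo_norm (trv n (\<phi> y) x)))"
    unfolding S_def using sum_trv[OF n, of "\<lambda>x. f (c - octo_norm x)"] by simp
  also have "\<dots> = (\<Sum>y\<in>?X. \<Sum>x\<in>?X. f ((c - octo_norm x) + (\<Sum>j<8. (- (\<psi> x ! j)) * y!j)))"
  proof (intro sum.cong refl)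
    fix y x
    have "[octo_norm (trv n (\<phi> y) x) = octo_norm x + dot (\<psi> x) y] (mod n)"
      using Q_trv gp unfolding goodpair_def by (blast intro: cong_trans)
    hence c1: "[c - octo_norm (trv n (\<phi> y) x) = c - (octo_norm x + dot (\<psi> x) y)] (mod n)"
      by (intro cong_diff cong_refl)
    have e: "c - (octo_norm x + dot (\<psi> x) y) = (c - octo_norm x) + (\<Sum>j<8. (- (\<psi> x ! j)) * y!j)"
      by (simp add: dot_def sum_negf)
    show "f (c - octo_norm (trv n (\<phi> y) x)) = f ((c - octo_norm x) + (\<Sum>j<8. (- (\<psi> x ! j)) * y!j))"
      using c1 unfolding e by (rule periodic_cong[of f n, OF per])
  qed
  also have "\<dots> = (\<Sum>x\<in>?X. \<Sum>y\<in>?X. f ((c - octo_norm x) + (\<Sum>j<8. (- (\<psi> x ! j)) * y!j)))"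
    by (rule sum.swap)
  also have "\<dots> = (\<Sum>x\<in>?X. if \<forall>j<8. n dvd \<psi> x ! j then of_int n ^ 8 * f (c - octo_norm x) else 0)"
  proof (rule sum.cong[OF refl])
    fix x
    show "(\<Sum>y\<in>?X. f ((c - octo_norm x) + (\<Sum>j<8. (- (\<psi> x ! j)) * y!j))) =
      (if \<forall>j<8. n dvd \<psi> x ! j then of_int n ^ 8 * f (c - octo_norm x) else 0)"
      using LV[OF pf n, where k=8 and c="c - octo_norm x" and w="\<lambda>j. - (\<psi> x ! j)"] by simp
  qed
  also have "\<dots> = (\<Sum>x\<in>?K. of_int n ^ 8 * f (c - octo_norm x))"
    by (simp add: sum.inter_filter[OF finite_Xn])
  also have "\<dots> = (\<Sum>x\<in>?K. of_int n ^ 8 * f c)"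
  proof (rule sum.cong[OF refl])
    fix x assume "x \<in> ?K"
    hence "n dvd octo_norm x" using gp unfolding goodpair_def by blast
    hence "[c - octo_norm x = c] (mod n)" by (simp add: cong_iff_dvd_diff)
    thus "of_int n ^ 8 * f (c - octo_norm x) = of_int n ^ 8 * f c"
      using periodic_cong[of f n, OF per] by simp
  qed
  also have "\<dots> = of_int n ^ 8 * (of_nat (card ?K) * f c)" by simp
  finally show ?thesis using n unfolding S_def by simp
qed

lemma zero_unique:
  assumes n: "0 < n" and h: "h \<in> Xn n 8" and d: "\<forall>j<8. n dvd gram h ! j"
  shows "h = replicate 8 0"
proof (rule nth_equalityI)
  show "length h = length (replicate 8 (0::int))" using h by (simp add: Xn_def)
  fix i assume "i < length h"
  hence i: "i < 8" using h by (simp add: Xn_def)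
  have "h!i \<in> set h" using h i by (simp add: Xn_def)
  hence r: "0 \<le> h!i" "h!i < n" using h by (auto simp: Xn_def)
  have "n dvd h!i" by (rule gram_dvd[OF d i])
  hence "h!i = 0" using r zdvd_imp_le[of n "h!i"] by (cases "h!i = 0") auto
  thus "h ! i = replicate 8 0 ! i" using i by simp
qed

lemma kappa:
  assumes pf: "primf n \<chi>" and n: "0 < n" and gp: "goodpair n \<phi> \<psi>"
    and mult: "\<And>a b. \<chi> (a * b) = \<chi> a * \<chi> b" and one: "\<chi> 1 = 1"
  shows "card {x\<in>Xn n 8. \<forall>j<8. n dvd \<psi> x ! j} = nat n ^ 4"
proof -
  let ?X = "Xn n 8"
  define \<kappa> where "\<kappa> = card {x\<in>Xn n 8. \<forall>j<8. n dvd \<psi> x ! j}"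
  have per: "\<And>a. \<chi> (a + n) = \<chi> a" using pf by (simp add: primf_def)
  have pfn: "primf n (\<lambda>z. \<chi> (- z))" by (rule primf_neg[OF pf mult])
  define D where "D = (\<Sum>y\<in>?X. \<Sum>x\<in>?X. \<chi> (1 - octo_norm x + octo_norm y))"
  have "D = (\<Sum>y\<in>?X. \<Sum>x\<in>?X. \<chi> ((1 + octo_norm y) - octo_norm x))"
    unfolding D_def by (simp add: algebra_simps)
  also have "\<dots> = (\<Sum>y\<in>?X. of_nat \<kappa> * \<chi> (1 + octo_norm y))"
  proof (rule sum.cong[OF refl])
    fix y
    show "(\<Sum>x\<in>?X. \<chi> ((1 + octo_norm y) - octo_norm x)) = of_nat \<kappa> * \<chi> (1 + octo_norm y)"
      unfolding \<kappa>_def by (rule main_sum[OF pf n gp])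
  qed
  also have "\<dots> = of_nat \<kappa> * (\<Sum>y\<in>?X. \<chi> (1 + octo_norm y))"
    by (simp add: sum_distrib_left)
  also have "(\<Sum>y\<in>?X. \<chi> (1 + octo_norm y)) = (\<Sum>y\<in>?X. (\<lambda>z. \<chi> (- z)) ((-1) - octo_norm y))"
    by (simp add: add.commute)
  also have "\<dots> = of_nat \<kappa> * (\<lambda>z. \<chi> (- z)) (-1)"
    unfolding \<kappa>_def by (rule main_sum[OF pfn n gp])
  finally have D1: "D = of_nat \<kappa> ^ 2" using one by (simp add: power2_eq_square)
  have "D = (\<Sum>y\<in>?X. \<Sum>h\<in>?X. \<chi> (1 - octo_norm (trv n y h) + octo_norm y))"
    unfolding D_def
  proof (rule sum.cong[OF refl])
    fix y
    show "(\<Sum>x\<in>?X. \<chi> (1 - octo_norm x + octo_norm y)) = (\<Sum>h\<in>?X. \<chi> (1 - octo_norm (trv n y h) + octo_norm y))"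
      using sum_trv[OF n, of "\<lambda>x. \<chi> (1 - octo_norm x + octo_norm y)" y] by simp
  qed
  also have "\<dots> = (\<Sum>y\<in>?X. \<Sum>h\<in>?X. \<chi> ((1 - octo_norm h) + (\<Sum>j<8. (- (gram h ! j)) * y!j)))"
  proof (intro sum.cong refl)
    fix y h
    have "[octo_norm (trv n y h) = octo_norm h + octo_norm y + dot (gram h) y] (mod n)"
      using Q_trv[of n y h] I0[of h y] by simp
    hence c1: "[1 - octo_norm (trv n y h) + octo_norm y = 1 - (octo_norm h + octo_norm y + dot (gram h) y) + octo_norm y] (mod n)"
      by (intro cong_diff cong_add cong_refl)
    have e: "1 - (octo_norm h + octo_norm y + dot (gram h) y) + octo_norm y = (1 - octo_norm h) + (\<Sum>j<8. (- (gram h ! j)) * y!j)"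
      by (simp add: dot_def sum_negf)
    show "\<chi> (1 - octo_norm (trv n y h) + octo_norm y) = \<chi> ((1 - octo_norm h) + (\<Sum>j<8. (- (gram h ! j)) * y!j))"
      using c1 unfolding e by (rule periodic_cong[of \<chi> n, OF per])
  qed
  also have "\<dots> = (\<Sum>h\<in>?X. \<Sum>y\<in>?X. \<chi> ((1 - octo_norm h) + (\<Sum>j<8. (- (gram h ! j)) * y!j)))"
    by (rule sum.swap)
  also have "\<dots> = (\<Sum>h\<in>?X. if \<forall>j<8. n dvd gram h ! j then of_int n ^ 8 * \<chi> (1 - octo_norm h) else 0)"
  proof (rule sum.cong[OF refl])
    fix h
    show "(\<Sum>y\<in>?X. \<chi> ((1 - octo_norm h) + (\<Sum>j<8. (- (gram h ! j)) * y!j))) =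
      (if \<forall>j<8. n dvd gram h ! j then of_int n ^ 8 * \<chi> (1 - octo_norm h) else 0)"
      using LV[OF pf n, where k=8 and c="1 - octo_norm h" and w="\<lambda>j. - (gram h ! j)"] by simp
  qed
  also have "\<dots> = (\<Sum>h\<in>{h\<in>?X. \<forall>j<8. n dvd gram h ! j}. of_int n ^ 8 * \<chi> (1 - octo_norm h))"
    by (simp add: sum.inter_filter[OF finite_Xn])
  also have "{h\<in>?X. \<forall>j<8. n dvd gram h ! j} = {replicate 8 0}"
  proof
    show "{h\<in>?X. \<forall>j<8. n dvd gram h ! j} \<subseteq> {replicate 8 0}" using zero_unique[OF n] by blast
    have "replicate 8 0 \<in> ?X" using n by (simp add: Xn_def)
    moreover have "\<forall>j<8. n dvd gram (replicate 8 0) ! j" by (simp add: gram_def less8)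
    ultimately show "{replicate 8 0} \<subseteq> {h\<in>?X. \<forall>j<8. n dvd gram h ! j}" by blast
  qed
  finally have D2: "D = of_int n ^ 8" using one Q_zero by simp
  have "of_nat (\<kappa>^2) = (of_nat (nat n ^ 8) :: complex)" using D1 D2 n by simp
  hence "\<kappa>^2 = (nat n ^ 4)^2" by (simp only: of_nat_eq_iff power_mult[symmetric]) simp
  hence "\<kappa> = nat n ^ 4" by (rule power_eq_imp_eq_base) simp_all
  thus ?thesis unfolding \<kappa>_def .
qed


lemma funpow_Q: "octo_norm ((octL s t ^^ k) y) = (s^2+t^2+1)^k * octo_norm y"
  by (induction k) (simp_all add: I1)

lemma funpow_adj: "dot (gram x) ((octL s t ^^ k) y) = dot (gram ((octL (-s) (-t) ^^ k) x)) y"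
proof (induction k arbitrary: x)
  case 0 then show ?case by simp
next
  case (Suc k)
  have "dot (gram x) ((octL s t ^^ Suc k) y) = dot (gram (octL (-s) (-t) x)) ((octL s t ^^ k) y)"
    using I2 by simp
  also have "\<dots> = dot (gram ((octL (-s) (-t) ^^ k) (octL (-s) (-t) x))) y" by (rule Suc.IH)
  also have "(octL (-s) (-t) ^^ k) (octL (-s) (-t) x) = (octL (-s) (-t) ^^ Suc k) x"
    by (simp add: funpow_Suc_right del: funpow.simps)
  finally show ?case .
qed

lemma good_pp:
  fixes p s t :: int
  assumes p: "prime p" and dv: "p dvd s^2+t^2+1" and ndv: "\<not> p^2 dvd s^2+t^2+1"
  shows "goodpair (p^k) ((octL s t)^^k) (\<lambda>x. gram (((octL (-s) (-t))^^k) x))"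
proof -
  define nn where "nn = s^2+t^2+1"
  obtain m where nm: "nn = p * m" using dv unfolding nn_def by (auto elim: dvdE)
  have pm: "\<not> p dvd m"
  proof
    assume "p dvd m"
    then obtain r where "m = p * r" by (auto elim: dvdE)
    hence "nn = p^2 * r" using nm by (simp add: power2_eq_square)
    thus False using ndv unfolding nn_def by simp
  qed
  have cop: "coprime (p^k) (m^k)" using prime_imp_coprime[OF p pm] by simp
  have nnk: "nn^k = p^k * m^k" using nm by (simp add: power_mult_distrib)
  have A: "[octo_norm (addv x ((octL s t ^^ k) y)) = octo_norm x + dot (gram ((octL (-s) (-t) ^^ k) x)) y] (mod p^k)"
    for x y
  proof -
    have "octo_norm (addv x ((octL s t ^^ k) y)) = octo_norm x + dot (gram ((octL (-s) (-t) ^^ k) x)) y + p^k * (m^k * octo_norm y)"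
      using I0[of x "(octL s t ^^ k) y"] funpow_Q[where s=s and t=t and k=k and y=y] funpow_adj[where x=x and s=s and t=t and k=k and y=y] nnk
      unfolding nn_def by (simp add: algebra_simps)
    thus ?thesis by (simp add: cong_iff_dvd_diff)
  qed
  have B: "p^k dvd octo_norm x" if h: "\<forall>j<8. p^k dvd gram ((octL (-s) (-t) ^^ k) x) ! j" for x
  proof -
    define z where "z = (octL (-s) (-t) ^^ k) x"
    have dz: "p^k dvd z!i" if "i < 8" for i using gram_dvd[of "p^k" z i] h that unfolding z_def by blast
    define e where "e = vec8 (\<lambda>i. z!i div p^k)"
    have "octo_norm z = octo_norm (vec8 (\<lambda>i. p^k * e!i))"
      by (rule octo_norm_eqI) (simp add: e_def dz)
    also have "\<dots> = (p^k)^2 * octo_norm e" by (rule Q_homog)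
    finally have z1: "octo_norm z = (p^k)^2 * octo_norm e" .
    have z2: "octo_norm z = nn^k * octo_norm x" unfolding z_def nn_def using funpow_Q[where s="-s" and t="-t" and k=k and y=x] by simp
    have "p^k * (m^k * octo_norm x) = p^k * (p^k * octo_norm e)"
      using z1 z2 nnk by (simp add: power2_eq_square algebra_simps)
    hence "m^k * octo_norm x = p^k * octo_norm e" using p by (simp add: prime_gt_0_int)
    hence "p^k dvd m^k * octo_norm x" by simp
    thus ?thesis using cop by (simp add: coprime_dvd_mult_right_iff)
  qed
  show ?thesis unfolding goodpair_def using A B by blast
qed

lemma good_one: "goodpair 1 \<phi> \<psi>"
  by (simp add: goodpair_def)

lemma good_crt:
  fixes a b :: int
  assumes g1: "goodpair a \<phi>1 \<psi>1" and g2: "goodpair b \<phi>2 \<psi>2" and cop: "coprime a b"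
  shows "\<exists>\<phi> \<psi>. goodpair (a*b) \<phi> \<psi>"
proof -
  obtain u v where uv: "u * a + v * b = gcd a b" using bezout_int by blast
  hence uv1: "u * a + v * b = 1" using cop by simp
  define e1 where "e1 = v * b"
  define e2 where "e2 = u * a"
  have e1a: "[e1 = 1] (mod a)" unfolding e1_def cong_iff_dvd_diff using uv1
    by (metis add_diff_cancel_right' diff_diff_eq2 dvd_triv_right minus_diff_eq dvd_minus_iff)
  have e2a: "[e2 = 0] (mod a)" unfolding e2_def by (simp add: cong_0_iff)
  have e1b: "[e1 = 0] (mod b)" unfolding e1_def by (simp add: cong_0_iff)
  have e2b: "[e2 = 1] (mod b)" unfolding e2_def cong_iff_dvd_diff using uv1
    by (metis add_diff_cancel_left' diff_diff_eq2 dvd_triv_right minus_diff_eq dvd_minus_iff)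
  define comb where "comb = (\<lambda>p q. vec8 (\<lambda>i. p!i * e1 + q!i * e2))"
  have ca: "[comb p q ! i = p!i] (mod a)" if "i < 8" for p q i
  proof -
    have "[p!i * e1 + q!i * e2 = p!i * 1 + q!i * 0] (mod a)"
      by (intro cong_add cong_mult cong_refl e1a e2a)
    thus ?thesis using that by (simp add: comb_def)
  qed
  have cb: "[comb p q ! i = q!i] (mod b)" if "i < 8" for p q i
  proof -
    have "[p!i * e1 + q!i * e2 = p!i * 0 + q!i * 1] (mod b)"
      by (intro cong_add cong_mult cong_refl e1b e2b)
    thus ?thesis using that by (simp add: comb_def)
  qed
  define \<phi> where "\<phi> = (\<lambda>y. comb (\<phi>1 y) (\<phi>2 y))"
  define \<psi> where "\<psi> = (\<lambda>x. comb (\<psi>1 x) (\<psi>2 x))"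
  have gen: "[octo_norm (addv x (\<phi> y)) = octo_norm x + dot (\<psi> x) y] (mod c)"
    if gi: "goodpair c \<phi>i \<psi>i" and ph: "\<And>y i. i < 8 \<Longrightarrow> [\<phi> y ! i = \<phi>i y ! i] (mod c)"
       and ps: "\<And>x i. i < 8 \<Longrightarrow> [\<psi> x ! i = \<psi>i x ! i] (mod c)" for c \<phi>i \<psi>i x y
  proof -
    have "[octo_norm (addv x (\<phi> y)) = octo_norm (addv x (\<phi>i y))] (mod c)"
      by (rule Q_cong) (simp add: addv_def ph cong_add)
    also have "[octo_norm (addv x (\<phi>i y)) = octo_norm x + dot (\<psi>i x) y] (mod c)"
      using gi unfolding goodpair_def by blast
    also have "[octo_norm x + dot (\<psi>i x) y = octo_norm x + dot (\<psi> x) y] (mod c)"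
      by (intro cong_add cong_refl dot_cong) (simp add: ps cong_sym)
    finally show ?thesis .
  qed
  have A: "[octo_norm (addv x (\<phi> y)) = octo_norm x + dot (\<psi> x) y] (mod a*b)" for x y
  proof (rule coprime_cong_mult[OF _ _ cop])
    show "[octo_norm (addv x (\<phi> y)) = octo_norm x + dot (\<psi> x) y] (mod a)"
      by (rule gen[OF g1]) (simp_all add: \<phi>_def \<psi>_def ca)
    show "[octo_norm (addv x (\<phi> y)) = octo_norm x + dot (\<psi> x) y] (mod b)"
      by (rule gen[OF g2]) (simp_all add: \<phi>_def \<psi>_def cb)
  qed
  have B: "a*b dvd octo_norm x" if h: "\<forall>j<8. a*b dvd \<psi> x ! j" for x
  proof (rule divides_mult[OF _ _ cop])
    have "\<forall>j<8. a dvd \<psi>1 x ! j"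
    proof (intro allI impI)
      fix j :: nat assume j: "j < 8"
      have "a dvd \<psi> x ! j" using h j by (meson dvd_mult_left)
      moreover have "[\<psi> x ! j = \<psi>1 x ! j] (mod a)" using ca[OF j] by (simp add: \<psi>_def)
      ultimately show "a dvd \<psi>1 x ! j" using cong_dvd_iff by blast
    qed
    thus "a dvd octo_norm x" using g1 unfolding goodpair_def by blast
    have "\<forall>j<8. b dvd \<psi>2 x ! j"
    proof (intro allI impI)
      fix j :: nat assume j: "j < 8"
      have "b dvd \<psi> x ! j" using h j by (meson dvd_mult_right)
      moreover have "[\<psi> x ! j = \<psi>2 x ! j] (mod b)" using cb[OF j] by (simp add: \<psi>_def)
      ultimately show "b dvd \<psi>2 x ! j" using cong_dvd_iff by blast
    qed
    thus "b dvd octo_norm x" using g2 unfolding goodpair_def by blast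
  qed
  show ?thesis unfolding goodpair_def using A B by blast
qed


lemma sq_inj:
  fixes P x x' H :: int
  assumes p: "prime P" and x: "0 \<le> x" "x \<le> H" and x': "0 \<le> x'" "x' \<le> H" and HP: "2*H < P"
    and c: "[x^2 = x'^2] (mod P)"
  shows "x = x'"
proof -
  have e: "x^2 - x'^2 = (x - x') * (x + x')" by (simp add: power2_eq_square algebra_simps)
  have "P dvd (x - x') * (x + x')" using c unfolding cong_iff_dvd_diff e .
  hence "P dvd x - x' \<or> P dvd x + x'" using p prime_dvd_mult_iff by blast
  thus ?thesis
  proof
    assume "P dvd x - x'"
    hence "[x = x'] (mod P)" by (simp add: cong_iff_dvd_diff)
    moreover have "x < P" "x' < P" using x x' HP by linarith+
    ultimately show ?thesis using cong_less_imp_eq_int x x' by blast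
  next
    assume d: "P dvd x + x'"
    show ?thesis
    proof (cases "x + x' = 0")
      case True thus ?thesis using x x' by simp
    next
      case False
      hence "0 < x + x'" using x x' by simp
      hence "P \<le> x + x'" using d zdvd_imp_le by blast
      thus ?thesis using x x' HP by simp
    qed
  qed
qed

lemma exists_st:
  assumes p: "prime (p::nat)"
  shows "\<exists>s t :: int. int p dvd s^2 + t^2 + 1 \<and> \<not> (int p)^2 dvd s^2 + t^2 + 1"
proof (cases "p = 2")
  case True
  show ?thesis by (rule exI[of _ 1], rule exI[of _ 0]) (simp add: True)
next
  case False
  have p2: "p > 2" using prime_ge_2_nat[OF p] False by simp
  have "odd p" using prime_odd_nat[OF p p2] .
  then obtain k where pk: "p = 2*k + 1" using oddE by blast
  define P where "P = int p"
  define H where "H = int k"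
  have PH: "P = 2*H + 1" using pk by (simp add: P_def H_def)
  have H1: "1 \<le> H" using pk p2 by (simp add: H_def)
  have pP: "prime P" using p by (simp add: P_def)
  let ?f = "\<lambda>x. x^2 mod P"
  let ?g = "\<lambda>y. (-1 - y^2) mod P"
  have injf: "inj_on ?f {0..H}"
  proof (rule inj_onI)
    fix x y assume "x \<in> {0..H}" "y \<in> {0..H}" "?f x = ?f y"
    thus "x = y" using sq_inj[OF pP, of x H y] PH by (simp add: cong_def)
  qed
  have injg: "inj_on ?g {0..H}"
  proof (rule inj_onI)
    fix x y assume xy: "x \<in> {0..H}" "y \<in> {0..H}" "?g x = ?g y"
    hence "[-1 - x^2 = -1 - y^2] (mod P)" by (simp add: cong_def)
    hence "[x^2 = y^2] (mod P)" by (simp add: cong_iff_dvd_diff dvd_diff_commute)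
    thus "x = y" using sq_inj[OF pP, of x H y] PH xy by simp
  qed
  have P0: "0 < P" using PH H1 by simp
  have sub: "?f ` {0..H} \<union> ?g ` {0..H} \<subseteq> {0..<P}" using P0 by auto
  have "?f ` {0..H} \<inter> ?g ` {0..H} \<noteq> {}"
  proof
    assume disj: "?f ` {0..H} \<inter> ?g ` {0..H} = {}"
    have "card (?f ` {0..H} \<union> ?g ` {0..H}) = card (?f ` {0..H}) + card (?g ` {0..H})"
      by (rule card_Un_disjoint) (simp_all add: disj)
    also have "\<dots> = 2 * nat (H + 1)" using card_image[OF injf] card_image[OF injg] by simp
    finally have "2 * nat (H + 1) \<le> card {0..<P}" using card_mono[OF _ sub] by simp
    thus False using PH H1 by simp
  qed
  then obtain x y where x: "x \<in> {0..H}" and y: "y \<in> {0..H}" and xy: "x^2 mod P = (-1 - y^2) mod P"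
    by blast
  have "[x^2 = -1 - y^2] (mod P)" using xy by (simp add: cong_def)
  hence "P dvd x^2 - (-1 - y^2)" by (simp only: cong_iff_dvd_diff)
  moreover have "x^2 - (-1 - y^2) = x^2 + y^2 + 1" by simp
  ultimately have dv: "P dvd x^2 + y^2 + 1" by simp
  have "x^2 \<le> H^2" "y^2 \<le> H^2" using x y by (simp_all add: power_mono)
  moreover have "P^2 = 4*H^2 + 4*H + 1" using PH by (simp add: power2_eq_square algebra_simps)
  ultimately have lt: "x^2 + y^2 + 1 < P^2" using H1 by (smt (verit) power2_eq_square mult_pos_pos)
  have pos: "0 < x^2 + y^2 + 1" by (simp add: add_nonneg_pos)
  have "\<not> P^2 dvd x^2 + y^2 + 1"
  proof
    assume "P^2 dvd x^2 + y^2 + 1"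
    hence "P^2 \<le> x^2 + y^2 + 1" using pos zdvd_imp_le by blast
    thus False using lt by simp
  qed
  thus ?thesis using dv unfolding P_def by blast
qed

lemma good_all: "0 < N \<Longrightarrow> \<exists>\<phi> \<psi>. goodpair (int N) \<phi> \<psi>"
proof (induction N rule: less_induct)
  case (less N)
  show ?case
  proof (cases "N = 1")
    case True thus ?thesis using good_one by auto
  next
    case False
    obtain p where p: "prime p" "p dvd N" using prime_factor_nat[OF False] by blast
    have N0: "N \<noteq> 0" using less.prems by simp
    have pu: "\<not> is_unit p" using prime_gt_1_nat[OF p(1)] by simp
    define k where "k = multiplicity p N"
    obtain m where Nm: "N = p ^ k * m" and pm: "\<not> p dvd m"
      using multiplicity_decompose'[OF N0 pu] unfolding k_def by blast
    have k0: "k \<noteq> 0"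
    proof
      assume "k = 0"
      hence "N = m" using Nm by simp
      thus False using p(2) pm by simp
    qed
    have m0: "0 < m" using N0 Nm by (cases m) auto
    have "2 \<le> p ^ k"
    proof -
      have "p \<le> p ^ k" using k0 prime_gt_0_nat[OF p(1)] by (simp add: self_le_power)
      thus ?thesis using prime_ge_2_nat[OF p(1)] by simp
    qed
    hence mN: "m < N" using Nm m0 by (metis less_le_trans mult_le_mono1 nat_mult_1 one_less_numeral_iff semiring_norm(76) mult_less_mono1)
    obtain \<phi>1 \<psi>1 where g1: "goodpair (int m) \<phi>1 \<psi>1" using less.IH[OF mN m0] by blast
    obtain s t where st: "int p dvd s^2+t^2+1" "\<not> (int p)^2 dvd s^2+t^2+1" using exists_st[OF p(1)] by blast
    have g2: "goodpair (int p ^ k) (octL s t ^^ k) (\<lambda>x. gram ((octL (-s) (-t) ^^ k) x))"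
      by (rule good_pp) (simp_all add: p st)
    have cop: "coprime (int p ^ k) (int m)" using prime_imp_coprime[OF p(1) pm] by simp
    obtain \<phi> \<psi> where "goodpair (int p ^ k * int m) \<phi> \<psi>" using good_crt[OF g2 g1 cop] by blast
    moreover have "int N = int p ^ k * int m" using Nm by simp
    ultimately show ?thesis by auto
  qed
qed

theorem lemma4p9:
  fixes N :: nat and \<chi> \<eta> :: "int \<Rightarrow> complex"
  assumes "0 < N"
    and "primitive_dirichlet_char N \<chi>"
    and "dirichlet_char N \<eta>"
  shows "jacobi_J2 N \<chi> \<eta> = of_nat N ^ 4 * jacobi3 N \<chi> \<chi> \<eta>"
proof -
  have n: "0 < int N" using assms(1) by simp
  have pf: "primf (int N) \<chi>" by (rule prim_primf[OF assms(1,2)])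
  have dc: "dirichlet_char N \<chi>" using assms(2) by (simp add: primitive_dirichlet_char_def)
  have mult: "\<And>a b. \<chi> (a*b) = \<chi> a * \<chi> b" and one: "\<chi> 1 = 1"
    using dc by (simp_all add: dirichlet_char_def)
  obtain \<phi> \<psi> where gp: "goodpair (int N) \<phi> \<psi>" using good_all[OF assms(1)] by blast
  have X: "octo_mod N = Xn (int N) 8" by (auto simp: octo_mod_def Xn_def)
  have S: "(\<Sum>x\<in>octo_mod N. \<chi> (c - octo_norm x)) = of_nat N ^ 4 * \<chi> c" for c
    using main_sum[OF pf n gp, of c] kappa[OF pf n gp mult one] unfolding X by simp
  have "jacobi_J2 N \<chi> \<eta> = (\<Sum>a\<in>{0..<int N}. \<Sum>b\<in>{0..<int N}.
          (\<Sum>x\<in>octo_mod N. \<chi> (a*b - octo_norm x)) * \<eta> (1 - (a+b)))"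
    unfolding jacobi_J2_def by (simp add: sum_distrib_right)
  also have "\<dots> = (\<Sum>a\<in>{0..<int N}. \<Sum>b\<in>{0..<int N}. of_nat N ^ 4 * (\<chi> a * \<chi> b * \<eta> (1 - a - b)))"
    by (intro sum.cong refl) (simp add: S mult diff_diff_eq)
  also have "\<dots> = of_nat N ^ 4 * jacobi3 N \<chi> \<chi> \<eta>"
    unfolding jacobi3_def by (simp add: sum_distrib_left)
  finally show ?thesis .
qed

end
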